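(* For $c>0$ and $\beta\in\mathcal{I}_H$ let $c\odot\beta:=\{(ca,cb)\colon(a,b)\in\beta\}$. For each $c>0$, the map $\beta\mapsto c\odot\beta$ is a bijection on $\mathcal{I}_\alpha$ and on $\mathcal{I}_H$; specifically, if $\beta\in\mathcal{I}_\alpha$ then $c\odot\beta$ has the $\alpha$-diversity property and $\mathscr{D}_{c\odot\beta}(ct)=c^\alpha\mathscr{D}_\beta(t)$ for all $t>0$. Moreover, for $\beta,\gamma\in\mathcal{I}_\alpha$ and $c>0$: $d_H'(\beta,c\odot\beta)=|c-1|\,\|\beta\|$, $d_H'(c\odot\beta,c\odot\gamma)=c\,d_H'(\beta,\gamma)$, $d_\alpha(\beta,c\odot\beta)\le\max\{|c^\alpha-1|\,\mathscr{D}_\beta(\infty),\ |c-1|\,\|\beta\|\}$, and $\min\{c,c^\alpha\}\,d_\alpha(\beta,\gamma)\le d_\alpha(c\odot\beta,c\odot\gamma)\le\max\{c,c^\alpha\}\,d_\alpha(\beta,\gamma)$.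
   Context: Fix $\alpha\in(0,1)$. An interval partition is a set $\beta$ of disjoint open subintervals (blocks) of some interval $[0,L]$ that cover $[0,L]$ up to a Lebesgue-null set; write $\|\beta\|:=L$ and $\mathrm{Leb}(U)$ for the length of a block $U$. $\mathcal{I}_H$ is the set of all interval partitions. $\beta$ has the $\alpha$-diversity property if for every $t\in[0,\|\beta\|]$ the limit $\mathscr{D}_\beta(t):=\Gamma(1-\alpha)\lim_{h\downarrow0}h^\alpha\#\{(a,b)\in\beta\colon b-a>h,\ b\le t\}$ exists; $\mathcal{I}_\alpha$ is the set of such partitions. For $U\in\beta$, $\mathscr{D}_\beta(U):=\mathscr{D}_\beta(t)$ for $t\in U$; $\mathscr{D}_\beta(\infty):=\mathscr{D}_\beta(\|\beta\|)$. A correspondence between $\beta,\gamma$ is a finite sequence $(U_j,V_j)_{j\in[n]}$, $n\ge0$, of pairs in $\beta\times\gamma$ with $(U_j)_j$ and $(V_j)_j$ each strictly increasing in left-to-right order. Its Hausdorff distortion is the maximum of (i) $\sum_{j}|\mathrm{Leb}(U_j)-\mathrm{Leb}(V_j)|+\|\beta\|-\sum_j\mathrm{Leb}(U_j)$ and (ii) $\sum_{j}|\mathrm{Leb}(U_j)-\mathrm{Leb}(V_j)|+\|\gamma\|-\sum_j\mathrm{Leb}(V_j)$; for $\beta,\gamma\in\mathcal{I}_\alpha$ its $\alpha$-distortion is the maximum of (i), (ii), (iii) $\sup_j|\mathscr{D}_\beta(U_j)-\mathscr{D}_\gamma(V_j)|$ and (iv) $|\mathscr{D}_\beta(\infty)-\mathscr{D}_\gamma(\infty)|$.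 $d_H'(\beta,\gamma)$ and $d_\alpha(\beta,\gamma)$ are the infima over all correspondences of the Hausdorff distortion and the $\alpha$-distortion, respectively. *)

theory Defs
  imports "HOL-Analysis.Analysis"
begin

text \<open>An interval partition is represented as a set of pairs (a,b) with a < b,
  each pair standing for the open block {a<..<b}.\<close>

type_synonym ipart = "(real \<times> real) set"

definition Leb :: "real \<times> real \<Rightarrow> real" where
  "Leb U = snd U - fst U"

definition block :: "real \<times> real \<Rightarrow> real set" where
  "block U = {fst U<..<snd U}"

text \<open>The total length; for an interval partition of [0,L] this is L.\<close>
definition IP_len :: "ipart \<Rightarrow> real" where
  "IP_len \<beta> = Sup (insert 0 (snd ` \<beta>))"

definition interval_partition :: "ipart \<Rightarrow> bool" where
  "interval_partition \<beta> \<longleftrightarrow>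
     (\<forall>U\<in>\<beta>. 0 \<le> fst U \<and> fst U < snd U)
   \<and> bdd_above (snd ` \<beta>)
   \<and> (\<forall>U\<in>\<beta>. \<forall>V\<in>\<beta>. U \<noteq> V \<longrightarrow> block U \<inter> block V = {})
   \<and> {0..IP_len \<beta>} - (\<Union>U\<in>\<beta>. block U) \<in> null_sets lebesgue"

definition IH :: "ipart set" where
  "IH = {\<beta>. interval_partition \<beta>}"

definition div_count :: "ipart \<Rightarrow> real \<Rightarrow> real \<Rightarrow> nat" where
  "div_count \<beta> t h = card {U\<in>\<beta>. snd U - fst U > h \<and> snd U \<le> t}"

definition has_diversity :: "real \<Rightarrow> ipart \<Rightarrow> bool" where
  "has_diversity \<alpha> \<beta> \<longleftrightarrow> (\<forall>t\<in>{0..IP_len \<beta>}.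
      \<exists>L. ((\<lambda>h. h powr \<alpha> * real (div_count \<beta> t h)) \<longlongrightarrow> L) (at_right 0))"

definition IA :: "real \<Rightarrow> ipart set" where
  "IA \<alpha> = {\<beta>. interval_partition \<beta> \<and> has_diversity \<alpha> \<beta>}"

definition diversity :: "real \<Rightarrow> ipart \<Rightarrow> real \<Rightarrow> real" where
  "diversity \<alpha> \<beta> t = Gamma (1 - \<alpha>) *
      Lim (at_right 0) (\<lambda>h. h powr \<alpha> * real (div_count \<beta> t h))"

text \<open>D_beta(U) := D_beta(t) for t in U (we take the midpoint).\<close>
definition div_block :: "real \<Rightarrow> ipart \<Rightarrow> real \<times> real \<Rightarrow> real" where
  "div_block \<alpha> \<beta> U = diversity \<alpha> \<beta> ((fst U + snd U) / 2)"

definition div_inf :: "real \<Rightarrow> ipart \<Rightarrow> real" where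
  "div_inf \<alpha> \<beta> = diversity \<alpha> \<beta> (IP_len \<beta>)"

definition correspondence :: "ipart \<Rightarrow> ipart \<Rightarrow> ((real \<times> real) \<times> (real \<times> real)) list \<Rightarrow> bool" where
  "correspondence \<beta> \<gamma> cs \<longleftrightarrow>
     (\<forall>p\<in>set cs. fst p \<in> \<beta> \<and> snd p \<in> \<gamma>)
   \<and> sorted_wrt (\<lambda>U U'. fst U < fst U') (map fst cs)
   \<and> sorted_wrt (\<lambda>V V'. fst V < fst V') (map snd cs)"

definition dis_H :: "ipart \<Rightarrow> ipart \<Rightarrow> ((real \<times> real) \<times> (real \<times> real)) list \<Rightarrow> real" where
  "dis_H \<beta> \<gamma> cs =
     (let S = sum_list (map (\<lambda>p. \<bar>Leb (fst p) - Leb (snd p)\<bar>) cs) in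
      max (S + IP_len \<beta> - sum_list (map (\<lambda>p. Leb (fst p)) cs))
          (S + IP_len \<gamma> - sum_list (map (\<lambda>p. Leb (snd p)) cs)))"

definition dis_alpha :: "real \<Rightarrow> ipart \<Rightarrow> ipart \<Rightarrow> ((real \<times> real) \<times> (real \<times> real)) list \<Rightarrow> real" where
  "dis_alpha \<alpha> \<beta> \<gamma> cs =
     max (dis_H \<beta> \<gamma> cs)
       (max (Max (insert 0 (set (map (\<lambda>p. \<bar>div_block \<alpha> \<beta> (fst p) - div_block \<alpha> \<gamma> (snd p)\<bar>) cs))))
            \<bar>div_inf \<alpha> \<beta> - div_inf \<alpha> \<gamma>\<bar>)"

definition dH' :: "ipart \<Rightarrow> ipart \<Rightarrow> real" where
  "dH' \<beta> \<gamma> = (INF cs\<in>{cs. correspondence \<beta> \<gamma> cs}. dis_H \<beta> \<gamma> cs)"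

definition d_alpha :: "real \<Rightarrow> ipart \<Rightarrow> ipart \<Rightarrow> real" where
  "d_alpha \<alpha> \<beta> \<gamma> = (INF cs\<in>{cs. correspondence \<beta> \<gamma> cs}. dis_alpha \<alpha> \<beta> \<gamma> cs)"

definition scale :: "real \<Rightarrow> ipart \<Rightarrow> ipart" where
  "scale c \<beta> = (\<lambda>(a, b). (c * a, c * b)) ` \<beta>"

end

theory Submission
  imports Defs
begin


definition sp :: "real \<Rightarrow> real \<times> real \<Rightarrow> real \<times> real" where
  "sp c U = (c * fst U, c * snd U)"

lemma sp_simps[simp]: "fst (sp c U) = c * fst U" "snd (sp c U) = c * snd U"
  by (auto simp: sp_def)

lemma scale_sp: "scale c \<beta> = sp c ` \<beta>"
  unfolding scale_def sp_def by (auto simp: case_prod_beta)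

lemma Leb_sp[simp]: "Leb (sp c U) = c * Leb U"
  by (simp add: Leb_def algebra_simps)

lemma sp_inv[simp]: "c \<noteq> 0 \<Longrightarrow> sp (1/c) (sp c U) = U" "c \<noteq> 0 \<Longrightarrow> sp c (sp (1/c) U) = U"
  by (auto simp: sp_def)

lemma scale_inv: "c \<noteq> 0 \<Longrightarrow> scale (1/c) (scale c \<beta>) = \<beta>"
  by (simp add: scale_sp image_image)

lemma inj_sp: "c \<noteq> 0 \<Longrightarrow> inj (sp c)"
  by (metis injI sp_inv(1))

lemma ip_basic:
  assumes "interval_partition \<beta>" "U \<in> \<beta>"
  shows "0 \<le> fst U" "fst U < snd U" "snd U \<le> IP_len \<beta>"
proof -
  show "0 \<le> fst U" "fst U < snd U" using assms by (auto simp: interval_partition_def)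
  have "bdd_above (insert 0 (snd ` \<beta>))" using assms by (auto simp: interval_partition_def)
  then show "snd U \<le> IP_len \<beta>" unfolding IP_len_def
    by (meson assms(2) cSup_upper image_eqI insertCI)
qed

lemma IP_len_nonneg: "0 \<le> IP_len \<beta>" if "interval_partition \<beta>"
proof -
  have "bdd_above (insert 0 (snd ` \<beta>))" using that by (auto simp: interval_partition_def)
  then show ?thesis unfolding IP_len_def by (meson cSup_upper insertCI)
qed

lemma ip_order:
  assumes "interval_partition \<beta>" "U \<in> \<beta>" "V \<in> \<beta>" "fst U < fst V"
  shows "snd U \<le> fst V"
proof (rule ccontr)
  assume hh: "\<not> snd U \<le> fst V"
  define x where "x = (fst V + min (snd U) (snd V)) / 2"
  have "fst V < snd V" using ip_basic[OF assms(1,3)] by simp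
  then have "x \<in> block U" "x \<in> block V" using hh assms(4)
    by (auto simp: block_def x_def)
  moreover have "U \<noteq> V" using assms(4) by auto
  ultimately show False using assms by (auto simp: interval_partition_def)
qed

lemma ip_fst_inj:
  assumes "interval_partition \<beta>"
  shows "inj_on fst \<beta>"
proof (rule inj_onI, rule ccontr)
  fix U V assume h: "U \<in> \<beta>" "V \<in> \<beta>" "fst U = fst V" "U \<noteq> V"
  define x where "x = (fst V + min (snd U) (snd V)) / 2"
  have "fst V < snd V" "fst U < snd U"
    using ip_basic(2)[OF assms h(2)] ip_basic(2)[OF assms h(1)] by simp_all
  then have "x \<in> block U" "x \<in> block V" using h(3)
    by (auto simp: block_def x_def min_def)
  then show False using assms h by (auto simp: interval_partition_def)
qed

lemma sorted_sum_le:
  assumes "interval_partition \<beta>" "set xs \<subseteq> \<beta>" "sorted_wrt (\<lambda>U V. fst U < fst V) xs" "xs \<noteq> []"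
  shows "sum_list (map Leb xs) \<le> IP_len \<beta> - fst (hd xs)"
  using assms(2-4)
proof (induction xs)
  case Nil then show ?case by simp
next
  case (Cons U ys)
  have b: "0 \<le> fst U" "fst U < snd U" "snd U \<le> IP_len \<beta>"
    using ip_basic[OF assms(1)] Cons.prems by auto
  show ?case
  proof (cases "ys = []")
    case True then show ?thesis using b by (simp add: Leb_def)
  next
    case False
    then have "hd ys \<in> set ys" by simp
    then have "fst U < fst (hd ys)" "hd ys \<in> \<beta>" using Cons.prems by auto
    then have "snd U \<le> fst (hd ys)" using ip_order[OF assms(1)] Cons.prems by auto
    moreover have "sum_list (map Leb ys) \<le> IP_len \<beta> - fst (hd ys)"
      using Cons False by auto
    moreover have "sum_list (map Leb (U#ys)) = Leb U + sum_list (map Leb ys)" by simp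
    moreover have "Leb U = snd U - fst U" by (simp add: Leb_def)
    ultimately show ?thesis by simp
  qed
qed

lemma sorted_sum_le':
  assumes "interval_partition \<beta>" "set xs \<subseteq> \<beta>" "sorted_wrt (\<lambda>U V. fst U < fst V) xs"
  shows "sum_list (map Leb xs) \<le> IP_len \<beta>"
proof (cases "xs = []")
  case True then show ?thesis using IP_len_nonneg[OF assms(1)] by simp
next
  case False
  then have "hd xs \<in> \<beta>" using assms(2) by auto
  then have "0 \<le> fst (hd xs)" using ip_basic[OF assms(1)] by auto
  then show ?thesis using sorted_sum_le[OF assms False] by simp
qed

lemma sorted_list_exists:
  assumes "interval_partition \<beta>" "finite F" "F \<subseteq> \<beta>"
  shows "\<exists>xs. set xs = F \<and> distinct xs \<and> sorted_wrt (\<lambda>U V. fst U < fst V) xs"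
proof -
  obtain ys where ys: "set ys = F" "distinct ys" using finite_distinct_list[OF assms(2)] by blast
  define xs where "xs = sort_key fst ys"
  have "set xs = F" "distinct xs" using ys by (auto simp: xs_def)
  moreover have "inj_on fst (set xs)"
    using ip_fst_inj[OF assms(1)] assms(3) \<open>set xs = F\<close> inj_on_subset by blast
  then have "sorted_wrt (<) (map fst xs)"
    using \<open>distinct xs\<close> by (simp add: strict_sorted_iff xs_def distinct_map)
  then have "sorted_wrt (\<lambda>U V. fst U < fst V) xs" by (simp add: sorted_wrt_map)
  ultimately show ?thesis by blast
qed

lemma finite_sum_le:
  assumes "interval_partition \<beta>" "finite F" "F \<subseteq> \<beta>"
  shows "sum Leb F \<le> IP_len \<beta>"
proof -
  obtain xs where "set xs = F" "distinct xs" "sorted_wrt (\<lambda>U V. fst U < fst V) xs"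
    using sorted_list_exists[OF assms] by blast
  then show ?thesis using sorted_sum_le'[OF assms(1)] assms(3)
    by (metis sum.distinct_set_conv_list)
qed

lemma finite_long:
  assumes "interval_partition \<beta>" "h > 0"
  shows "finite {U\<in>\<beta>. Leb U > h}"
proof (rule ccontr)
  assume inf: "infinite {U\<in>\<beta>. Leb U > h}"
  define n where "n = nat (ceiling (IP_len \<beta> / h)) + 1"
  have "IP_len \<beta> / h < real n" unfolding n_def by linarith
  then have n: "IP_len \<beta> < real n * h" using assms(2) by (simp add: field_simps)
  obtain B where B: "B \<subseteq> {U\<in>\<beta>. Leb U > h}" "finite B" "card B = n"
    using infinite_arbitrarily_large[OF inf] by blast
  have "real (card B) * h \<le> sum Leb B"
    using sum_bounded_below[of B h Leb] B(1) by force
  also have "\<dots> \<le> IP_len \<beta>" using finite_sum_le[OF assms(1) B(2)] B(1) by auto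
  finally show False using n B(3) by simp
qed



lemma approx_sum:
  assumes ip: "interval_partition \<beta>" and e: "\<epsilon> > 0"
  shows "\<exists>F. finite F \<and> F \<subseteq> \<beta> \<and> sum Leb F > IP_len \<beta> - \<epsilon>"
proof -
  define L where "L = IP_len \<beta>"
  define Bs where "Bs = (\<Union>U\<in>\<beta>. block U)"
  define A where "A n = (\<Union>U\<in>{U\<in>\<beta>. Leb U > 1 / real (Suc n)}. block U)" for n
  have blk_sub: "block U \<subseteq> {0..L}" if "U \<in> \<beta>" for U
    using ip_basic[OF ip that] by (auto simp: block_def L_def)
  have Bs_sub: "Bs \<subseteq> {0..L}" using blk_sub by (auto simp: Bs_def)
  have A_sub: "A n \<subseteq> Bs" for n by (auto simp: A_def Bs_def)
  have open_blk: "open (block U)" for U by (simp add: block_def)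
  have Bs_lm: "Bs \<in> lmeasurable"
  proof (rule lmeasurable_open)
    show "bounded Bs" using Bs_sub bounded_subset[OF bounded_closed_interval] by blast
    show "open Bs" by (auto simp: Bs_def intro!: open_UN open_blk)
  qed
  have A_lm: "A n \<in> lmeasurable" for n
  proof (rule lmeasurable_open)
    show "bounded (A n)" using A_sub[of n] Bs_sub bounded_subset[OF bounded_closed_interval] by blast
    show "open (A n)" by (auto simp: A_def intro!: open_UN open_blk)
  qed
  have inc: "incseq A"
  proof (rule incseq_SucI)
    fix n
    have "1 / real (Suc (Suc n)) \<le> 1 / real (Suc n)" by (simp add: frac_le)
    then show "A n \<subseteq> A (Suc n)" unfolding A_def by force
  qed
  have UA: "(\<Union>n. A n) = Bs"
  proof
    show "(\<Union>n. A n) \<subseteq> Bs" using A_sub by auto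
    show "Bs \<subseteq> (\<Union>n. A n)"
    proof
      fix x assume "x \<in> Bs"
      then obtain U where U: "U \<in> \<beta>" "x \<in> block U" by (auto simp: Bs_def)
      have "Leb U > 0" using ip_basic(2)[OF ip U(1)] by (simp add: Leb_def)
      then obtain n where "1 / real (Suc n) < Leb U"
        by (meson nat_approx_posE)
      then have "x \<in> A n" unfolding A_def using U by blast
      then show "x \<in> (\<Union>n. A n)" by blast
    qed
  qed
  have lim: "(\<lambda>n. measure lebesgue (A n)) \<longlonglongrightarrow> measure lebesgue Bs"
  proof -
    have r: "range A \<subseteq> sets lebesgue" using A_lm by (auto simp: fmeasurable_def)
    have f: "emeasure lebesgue (\<Union>n. A n) \<noteq> \<infinity>" using Bs_lm UA by (auto simp: fmeasurable_def)
    show ?thesis using Lim_measure_incseq[OF r inc f] UA by simp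
  qed
  have N: "{0..L} - Bs \<in> null_sets lebesgue" using ip by (simp add: interval_partition_def L_def Bs_def)
  have "L = measure lebesgue {0..L}" using IP_len_nonneg[OF ip] by (simp add: L_def)
  also have "\<dots> \<le> measure lebesgue (Bs \<union> ({0..L} - Bs))"
  proof (rule measure_mono_fmeasurable)
    have "{0..L} - Bs \<in> fmeasurable lebesgue" by (rule fmeasurableI_null_sets[OF N])
    then show "Bs \<union> ({0..L} - Bs) \<in> fmeasurable lebesgue" by (rule fmeasurable.Un[OF Bs_lm])
  qed auto
  also have "\<dots> = measure lebesgue Bs"
    by (rule measure_Un_null_set[OF _ N]) (use Bs_lm in \<open>simp add: fmeasurable_def\<close>)
  finally have LB: "L \<le> measure lebesgue Bs" .
  obtain n where n: "measure lebesgue (A n) > measure lebesgue Bs - \<epsilon>"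
  proof -
    have "\<forall>\<^sub>F n in sequentially. dist (measure lebesgue (A n)) (measure lebesgue Bs) < \<epsilon>"
      using lim e by (simp add: tendsto_iff)
    then obtain n where "dist (measure lebesgue (A n)) (measure lebesgue Bs) < \<epsilon>"
      using eventually_sequentially by auto
    then have "measure lebesgue (A n) > measure lebesgue Bs - \<epsilon>"
      by (auto simp: dist_real_def abs_less_iff)
    then show ?thesis by (rule that)
  qed
  define F where "F = {U\<in>\<beta>. Leb U > 1 / real (Suc n)}"
  have finF: "finite F" unfolding F_def by (rule finite_long[OF ip]) simp
  have "measure lebesgue (A n) \<le> (\<Sum>U\<in>F. measure lebesgue (block U))"
    unfolding A_def F_def[symmetric]
    by (rule measure_UNION_le[OF finF]) (simp add: block_def)
  also have "\<dots> = sum Leb F"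
  proof (rule sum.cong)
    fix U assume "U \<in> F"
    then have "fst U \<le> snd U" using ip_basic(2)[OF ip] by (auto simp: F_def less_imp_le)
    then show "measure lebesgue (block U) = Leb U" by (simp add: block_def Leb_def)
  qed simp
  finally have "measure lebesgue (A n) \<le> sum Leb F" .
  then have "sum Leb F > IP_len \<beta> - \<epsilon>" using n LB unfolding L_def by linarith
  moreover have "F \<subseteq> \<beta>" by (auto simp: F_def)
  ultimately show ?thesis using finF by blast
qed


lemma count_const:
  assumes "interval_partition \<beta>" "IP_len \<beta> \<le> t"
  shows "div_count \<beta> t h = div_count \<beta> (IP_len \<beta>) h"
proof -
  have "{U\<in>\<beta>. snd U - fst U > h \<and> snd U \<le> t} = {U\<in>\<beta>. snd U - fst U > h \<and> snd U \<le> IP_len \<beta>}"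
    using ip_basic(3)[OF assms(1)] assms(2) by force
  then show ?thesis by (simp add: div_count_def)
qed

lemma lim_exists:
  assumes "\<beta> \<in> IA \<alpha>" "0 \<le> t"
  shows "((\<lambda>h. h powr \<alpha> * real (div_count \<beta> t h)) \<longlongrightarrow>
           Lim (at_right 0) (\<lambda>h. h powr \<alpha> * real (div_count \<beta> t h))) (at_right 0)"
proof -
  have ip: "interval_partition \<beta>" and hd: "has_diversity \<alpha> \<beta>" using assms by (auto simp: IA_def)
  have "\<exists>L. ((\<lambda>h. h powr \<alpha> * real (div_count \<beta> t h)) \<longlongrightarrow> L) (at_right 0)"
  proof (cases "t \<le> IP_len \<beta>")
    case True
    then have "t \<in> {0..IP_len \<beta>}" using assms(2) by simp
    then show ?thesis using hd unfolding has_diversity_def by blast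
  next
    case False
    have e: "(\<lambda>h. h powr \<alpha> * real (div_count \<beta> t h)) = (\<lambda>h. h powr \<alpha> * real (div_count \<beta> (IP_len \<beta>) h))"
    proof (rule ext)
      fix h show "h powr \<alpha> * real (div_count \<beta> t h) = h powr \<alpha> * real (div_count \<beta> (IP_len \<beta>) h)"
      proof -
        have "div_count \<beta> t h = div_count \<beta> (IP_len \<beta>) h"
          by (rule count_const[OF ip]) (use False in linarith)
        then show ?thesis by (simp only:)
      qed
    qed
    have "IP_len \<beta> \<in> {0..IP_len \<beta>}" using IP_len_nonneg[OF ip] by simp
    then show ?thesis using hd unfolding has_diversity_def e by blast
  qed
  then obtain L where L: "((\<lambda>h. h powr \<alpha> * real (div_count \<beta> t h)) \<longlongrightarrow> L) (at_right 0)" by blast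
  have "Lim (at_right 0) (\<lambda>h. h powr \<alpha> * real (div_count \<beta> t h)) = L"
    by (rule tendsto_Lim[OF trivial_limit_at_right_real L])
  then show ?thesis using L by simp
qed

lemma count_mono:
  assumes "interval_partition \<beta>" "s \<le> t" "h > 0"
  shows "div_count \<beta> s h \<le> div_count \<beta> t h"
proof -
  have "finite {U\<in>\<beta>. snd U - fst U > h \<and> snd U \<le> t}"
    by (rule finite_subset[OF _ finite_long[OF assms(1,3)]]) (auto simp: Leb_def)
  then show ?thesis unfolding div_count_def
    by (rule card_mono) (use assms(2) in auto)
qed

lemma diversity_nonneg:
  assumes "\<beta> \<in> IA \<alpha>" "0 \<le> t" "\<alpha> < 1"
  shows "0 \<le> diversity \<alpha> \<beta> t"
proof -
  have "0 \<le> Lim (at_right 0) (\<lambda>h. h powr \<alpha> * real (div_count \<beta> t h))"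
    by (rule tendsto_lowerbound[OF lim_exists[OF assms(1,2)]]) auto
  moreover have "Gamma (1 - \<alpha>) > 0" using assms(3) by simp
  ultimately show ?thesis by (simp add: diversity_def)
qed

lemma diversity_mono:
  assumes "\<beta> \<in> IA \<alpha>" "0 \<le> s" "s \<le> t" "\<alpha> < 1"
  shows "diversity \<alpha> \<beta> s \<le> diversity \<alpha> \<beta> t"
proof -
  have ip: "interval_partition \<beta>" using assms by (auto simp: IA_def)
  have "Lim (at_right 0) (\<lambda>h. h powr \<alpha> * real (div_count \<beta> s h))
     \<le> Lim (at_right 0) (\<lambda>h. h powr \<alpha> * real (div_count \<beta> t h))"
  proof (rule tendsto_le[OF _ lim_exists[OF assms(1)] lim_exists[OF assms(1,2)]])
    show "\<forall>\<^sub>F x in at_right 0. x powr \<alpha> * real (div_count \<beta> s x) \<le> x powr \<alpha> * real (div_count \<beta> t x)"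
      using count_mono[OF ip assms(3)] eventually_at_right_less[of 0]
      by (auto elim!: eventually_mono intro!: mult_left_mono)
  qed (use assms in auto)
  moreover have "Gamma (1 - \<alpha>) > 0" using assms(4) by simp
  ultimately show ?thesis by (simp add: diversity_def)
qed

lemma count_scale:
  assumes "c > 0"
  shows "div_count (scale c \<beta>) t h = div_count \<beta> (t / c) (h / c)"
proof -
  have "{U\<in>scale c \<beta>. snd U - fst U > h \<and> snd U \<le> t} = sp c ` {U\<in>\<beta>. snd U - fst U > h / c \<and> snd U \<le> t / c}"
  proof -
    have e: "(c * snd U - c * fst U > h \<and> c * snd U \<le> t) \<longleftrightarrow> (snd U - fst U > h / c \<and> snd U \<le> t / c)" for U
      using assms by (simp add: pos_divide_less_eq pos_le_divide_eq right_diff_distrib[symmetric] mult.commute)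
    show ?thesis unfolding scale_sp
    proof (intro set_eqI iffI)
      fix x assume "x \<in> {U \<in> sp c ` \<beta>. h < snd U - fst U \<and> snd U \<le> t}"
      then obtain U where U: "U \<in> \<beta>" "x = sp c U" "h < snd x - fst x \<and> snd x \<le> t" by blast
      then have "U \<in> {U \<in> \<beta>. h / c < snd U - fst U \<and> snd U \<le> t / c}" using e[of U] by simp
      then show "x \<in> sp c ` {U \<in> \<beta>. h / c < snd U - fst U \<and> snd U \<le> t / c}"
        using U(2) by (rule rev_image_eqI)
    next
      fix x assume "x \<in> sp c ` {U \<in> \<beta>. h / c < snd U - fst U \<and> snd U \<le> t / c}"
      then obtain U where U: "U \<in> \<beta>" "x = sp c U" "h / c < snd U - fst U \<and> snd U \<le> t / c" by blast
      then have "h < snd x - fst x \<and> snd x \<le> t" using e[of U] by simp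
      moreover have "x \<in> sp c ` \<beta>" using U by blast
      ultimately show "x \<in> {U \<in> sp c ` \<beta>. h < snd U - fst U \<and> snd U \<le> t}" by blast
    qed
  qed
  moreover have "inj_on (sp c) X" for X by (rule inj_on_subset[OF inj_sp]) (use assms in auto)
  ultimately show ?thesis unfolding div_count_def by (simp add: card_image)
qed

lemma lim_scale:
  assumes "c > 0" "((\<lambda>h. h powr \<alpha> * real (div_count \<beta> s h)) \<longlongrightarrow> l) (at_right 0)"
  shows "((\<lambda>h. h powr \<alpha> * real (div_count (scale c \<beta>) (c * s) h)) \<longlongrightarrow> c powr \<alpha> * l) (at_right 0)"
proof -
  have fl: "filterlim (\<lambda>h. h / c) (at_right 0) (at_right (0::real))"
  proof -
    have "((\<lambda>h. h / c) \<longlongrightarrow> 0 / c) (at_right (0::real))"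
      by (rule tendsto_divide[OF tendsto_ident_at tendsto_const]) (use assms in simp)
    then have t: "((\<lambda>h. h / c) \<longlongrightarrow> 0) (at_right (0::real))" by simp
    have "\<forall>\<^sub>F h in at_right (0::real). h / c \<in> {0<..} \<and> h / c \<noteq> 0"
      using eventually_at_right_less[of "0::real"] by (rule eventually_mono) (use assms in simp)
    then show ?thesis unfolding filterlim_at using t by blast
  qed
  have "((\<lambda>h. c powr \<alpha> * ((h / c) powr \<alpha> * real (div_count \<beta> s (h / c)))) \<longlongrightarrow> c powr \<alpha> * l) (at_right 0)"
    by (intro tendsto_mult_left filterlim_compose[OF assms(2) fl])
  moreover have "\<forall>\<^sub>F h in at_right 0. c powr \<alpha> * ((h / c) powr \<alpha> * real (div_count \<beta> s (h / c)))
      = h powr \<alpha> * real (div_count (scale c \<beta>) (c * s) h)"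
    using eventually_at_right_less[of 0] 
  proof (rule eventually_mono)
    fix h :: real assume "0 < h"
    then show "c powr \<alpha> * ((h / c) powr \<alpha> * real (div_count \<beta> s (h / c)))
      = h powr \<alpha> * real (div_count (scale c \<beta>) (c * s) h)"
      using assms(1) by (simp add: count_scale powr_divide)
  qed
  ultimately show ?thesis by (rule Lim_transform_eventually)
qed

lemma diversity_scale:
  assumes "\<beta> \<in> IA \<alpha>" "0 \<le> t" "c > 0"
  shows "diversity \<alpha> (scale c \<beta>) (c * t) = c powr \<alpha> * diversity \<alpha> \<beta> t"
proof -
  have e: "Lim (at_right 0) (\<lambda>h. h powr \<alpha> * real (div_count (scale c \<beta>) (c * t) h))
     = c powr \<alpha> * Lim (at_right 0) (\<lambda>h. h powr \<alpha> * real (div_count \<beta> t h))"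
    by (rule tendsto_Lim[OF trivial_limit_at_right_real lim_scale[OF assms(3) lim_exists[OF assms(1,2)]]])
  show ?thesis unfolding diversity_def e by (rule mult.left_commute)
qed



lemma sup_scale:
  fixes A :: "real set"
  assumes "c > 0" "A \<noteq> {}" "bdd_above A"
  shows "Sup ((*) c ` A) = c * Sup A"
proof (rule antisym)
  show "Sup ((*) c ` A) \<le> c * Sup A"
    by (rule cSup_least) (use assms in \<open>auto intro!: mult_left_mono cSup_upper\<close>)
  obtain M where M: "\<And>x. x \<in> A \<Longrightarrow> x \<le> M" using assms(3) by (auto simp: bdd_above_def)
  have bdd: "bdd_above ((*) c ` A)"
    by (rule bdd_aboveI2[of _ _ "c * M"]) (use M assms(1) in auto)
  have "Sup A \<le> Sup ((*) c ` A) / c"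
  proof (rule cSup_least[OF assms(2)])
    fix x assume "x \<in> A"
    then have "c * x \<le> Sup ((*) c ` A)" by (intro cSup_upper[OF _ bdd]) auto
    then show "x \<le> Sup ((*) c ` A) / c" using assms(1) by (simp add: pos_le_divide_eq mult.commute)
  qed
  then show "c * Sup A \<le> Sup ((*) c ` A)" using assms(1) by (simp add: pos_le_divide_eq mult.commute)
qed

lemma IP_len_scale:
  assumes "c > 0" "interval_partition \<beta>"
  shows "IP_len (scale c \<beta>) = c * IP_len \<beta>"
proof -
  have e: "insert 0 (snd ` scale c \<beta>) = (*) c ` insert 0 (snd ` \<beta>)"
    by (auto simp: scale_sp image_image)
  have b: "bdd_above (insert 0 (snd ` \<beta>))" using assms(2) by (auto simp: interval_partition_def)
  show ?thesis unfolding IP_len_def e by (rule sup_scale[OF assms(1) _ b]) simp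
qed

lemma mem_blocks_scale:
  assumes "c > 0"
  shows "x \<in> (\<Union>U\<in>scale c \<beta>. block U) \<longleftrightarrow> x / c \<in> (\<Union>U\<in>\<beta>. block U)"
proof -
  have "x \<in> block (sp c U) \<longleftrightarrow> x / c \<in> block U" for U
    using assms by (simp add: block_def pos_less_divide_eq pos_divide_less_eq mult.commute)
  then show ?thesis unfolding scale_sp by blast
qed

lemma negl_scale:
  fixes N :: "real set"
  assumes "c > 0" "N \<in> null_sets lebesgue"
  shows "(*) c ` N \<in> null_sets lebesgue"
proof -
  have nN: "negligible N" using assms(2) by (simp add: negligible_iff_null_sets)
  have "negligible ((*) c ` N)"
  proof (rule negligible_locally_Lipschitz_image[where f = "(*) c", OF _ nN])
    fix x :: real assume "x \<in> N"
    show "\<exists>T B. open T \<and> x \<in> T \<and> (\<forall>y\<in>N \<inter> T. norm (c * y - c * x) \<le> B * norm (y - x))"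
      by (rule exI[of _ UNIV], rule exI[of _ c]) (use assms(1) in \<open>simp add: abs_mult right_diff_distrib[symmetric]\<close>)
  qed simp
  then show ?thesis by (simp add: negligible_iff_null_sets)
qed

lemma ip_scale:
  assumes c: "c > 0" and ip: "interval_partition \<beta>"
  shows "interval_partition (scale c \<beta>)"
  unfolding interval_partition_def
proof (intro conjI)
  show "\<forall>U\<in>scale c \<beta>. 0 \<le> fst U \<and> fst U < snd U"
    using ip c unfolding scale_sp interval_partition_def by auto
  obtain M where M: "\<And>x. x \<in> snd ` \<beta> \<Longrightarrow> x \<le> M" using ip by (auto simp: interval_partition_def bdd_above_def)
  show "bdd_above (snd ` scale c \<beta>)"
  proof (rule bdd_aboveI[of _ "c * M"])
    fix x assume "x \<in> snd ` scale c \<beta>"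
    then obtain U where U: "U \<in> \<beta>" "x = snd (sp c U)" unfolding scale_sp by blast
    then have "snd U \<le> M" using M by blast
    then show "x \<le> c * M" using U(2) c by simp
  qed
  show "\<forall>U\<in>scale c \<beta>. \<forall>V\<in>scale c \<beta>. U \<noteq> V \<longrightarrow> block U \<inter> block V = {}"
  proof (intro ballI impI)
    fix U V assume "U \<in> scale c \<beta>" "V \<in> scale c \<beta>" "U \<noteq> V"
    then obtain U' V' where UV: "U' \<in> \<beta>" "V' \<in> \<beta>" "U = sp c U'" "V = sp c V'" "U' \<noteq> V'"
      unfolding scale_sp by blast
    have d: "block U' \<inter> block V' = {}" using ip UV by (auto simp: interval_partition_def)
    have "x \<in> block (sp c W) \<longleftrightarrow> x / c \<in> block W" for x W
      using c by (simp add: block_def pos_less_divide_eq pos_divide_less_eq mult.commute)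
    then show "block U \<inter> block V = {}" using d UV by blast
  qed
  define N where "N = {0..IP_len \<beta>} - (\<Union>U\<in>\<beta>. block U)"
  have N: "N \<in> null_sets lebesgue" using ip by (simp add: interval_partition_def N_def)
  have "{0..IP_len (scale c \<beta>)} - (\<Union>U\<in>scale c \<beta>. block U) = (*) c ` N"
  proof (intro set_eqI iffI)
    fix x assume x: "x \<in> {0..IP_len (scale c \<beta>)} - (\<Union>U\<in>scale c \<beta>. block U)"
    then have x1: "x \<in> {0..c * IP_len \<beta>}" and x2: "x \<notin> (\<Union>U\<in>scale c \<beta>. block U)"
      unfolding IP_len_scale[OF c ip] by auto
    from x2 have x3: "x / c \<notin> (\<Union>U\<in>\<beta>. block U)" using mem_blocks_scale[OF c, of x \<beta>] by simp
    from x1 have "x / c \<in> {0..IP_len \<beta>}" using c by (simp add: pos_divide_le_eq mult.commute)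
    then have "x / c \<in> N" using x3 unfolding N_def by blast
    moreover have "x = c * (x / c)" using c by simp
    ultimately show "x \<in> (*) c ` N" by blast
  next
    fix x assume "x \<in> (*) c ` N"
    then obtain y where y: "y \<in> N" "x = c * y" by blast
    then have "x / c = y" using c by simp
    then show "x \<in> {0..IP_len (scale c \<beta>)} - (\<Union>U\<in>scale c \<beta>. block U)"
      unfolding IP_len_scale[OF c ip] using mem_blocks_scale[OF c, of x \<beta>] y c
      by (auto simp: N_def)
  qed
  then show "{0..IP_len (scale c \<beta>)} - (\<Union>U\<in>scale c \<beta>. block U) \<in> null_sets lebesgue"
    using negl_scale[OF c N] by simp
qed



definition spp :: "real \<Rightarrow> (real \<times> real) \<times> (real \<times> real) \<Rightarrow> (real \<times> real) \<times> (real \<times> real)" where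
  "spp c p = (sp c (fst p), sp c (snd p))"

lemma spp_simps[simp]: "fst (spp c p) = sp c (fst p)" "snd (spp c p) = sp c (snd p)"
  by (auto simp: spp_def)

lemma spp_inv: "c \<noteq> 0 \<Longrightarrow> spp c (spp (1/c) p) = p"
  by (simp add: spp_def)

lemma corr_scale:
  assumes c: "c > 0" and cs: "correspondence \<beta> \<gamma> cs"
  shows "correspondence (scale c \<beta>) (scale c \<gamma>) (map (spp c) cs)"
proof -
  have m: "\<forall>p\<in>set cs. fst p \<in> \<beta> \<and> snd p \<in> \<gamma>"
    and s1: "sorted_wrt (\<lambda>U U'. fst U < fst U') (map fst cs)"
    and s2: "sorted_wrt (\<lambda>V V'. fst V < fst V') (map snd cs)"
    using cs by (auto simp: correspondence_def)
  have "\<forall>p\<in>set (map (spp c) cs). fst p \<in> scale c \<beta> \<and> snd p \<in> scale c \<gamma>"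
    using m by (auto simp: scale_sp)
  moreover have "sorted_wrt (\<lambda>U U'. fst U < fst U') (map fst (map (spp c) cs))"
    using s1 c by (simp add: sorted_wrt_map o_def)
  moreover have "sorted_wrt (\<lambda>U U'. fst U < fst U') (map snd (map (spp c) cs))"
    using s2 c by (simp add: sorted_wrt_map o_def)
  ultimately show ?thesis by (simp add: correspondence_def)
qed

lemma corr_set_scale:
  assumes c: "c > 0"
  shows "{cs. correspondence (scale c \<beta>) (scale c \<gamma>) cs} = map (spp c) ` {cs. correspondence \<beta> \<gamma> cs}"
proof (intro set_eqI iffI)
  fix cs assume "cs \<in> {cs. correspondence (scale c \<beta>) (scale c \<gamma>) cs}"
  then have "correspondence (scale (1/c) (scale c \<beta>)) (scale (1/c) (scale c \<gamma>)) (map (spp (1/c)) cs)"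
    using corr_scale[of "1/c"] c by simp
  then have "correspondence \<beta> \<gamma> (map (spp (1/c)) cs)" using c by (simp add: scale_inv)
  moreover have "cs = map (spp c) (map (spp (1/c)) cs)" using c by (simp add: spp_inv map_idI)
  ultimately show "cs \<in> map (spp c) ` {cs. correspondence \<beta> \<gamma> cs}" by blast
qed (use corr_scale[OF c] in auto)

lemma dis_H_scale:
  assumes c: "c > 0" and ip: "interval_partition \<beta>" "interval_partition \<gamma>"
  shows "dis_H (scale c \<beta>) (scale c \<gamma>) (map (spp c) cs) = c * dis_H \<beta> \<gamma> cs"
proof -
  define S where "S = sum_list (map (\<lambda>p. \<bar>Leb (fst p) - Leb (snd p)\<bar>) cs)"
  define SU where "SU = sum_list (map (\<lambda>p. Leb (fst p)) cs)"
  define SV where "SV = sum_list (map (\<lambda>p. Leb (snd p)) cs)"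
  have pt: "\<bar>c * a - c * b\<bar> = c * \<bar>a - b\<bar>" for a b
    using c by (simp add: right_diff_distrib[symmetric] abs_mult)
  have 1: "sum_list (map (\<lambda>p. \<bar>Leb (fst p) - Leb (snd p)\<bar>) (map (spp c) cs)) = c * S"
  proof -
    have "map (\<lambda>p. \<bar>Leb (fst p) - Leb (snd p)\<bar>) (map (spp c) cs) = map (\<lambda>p. c * \<bar>Leb (fst p) - Leb (snd p)\<bar>) cs"
      by (simp add: pt)
    then show ?thesis by (simp only: S_def sum_list_const_mult)
  qed
  have 2: "sum_list (map (\<lambda>p. Leb (fst p)) (map (spp c) cs)) = c * SU"
    by (simp add: SU_def o_def sum_list_const_mult)
  have 3: "sum_list (map (\<lambda>p. Leb (snd p)) (map (spp c) cs)) = c * SV"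
    by (simp add: SV_def o_def sum_list_const_mult)
  have "dis_H (scale c \<beta>) (scale c \<gamma>) (map (spp c) cs)
     = max (c * S + c * IP_len \<beta> - c * SU) (c * S + c * IP_len \<gamma> - c * SV)"
    unfolding dis_H_def Let_def 1 2 3 IP_len_scale[OF c ip(1)] IP_len_scale[OF c ip(2)] ..
  also have "\<dots> = c * max (S + IP_len \<beta> - SU) (S + IP_len \<gamma> - SV)"
    using c by (simp add: max_mult_distrib_left algebra_simps)
  finally show ?thesis unfolding dis_H_def Let_def S_def SU_def SV_def .
qed

lemma dis_H_lower:
  assumes ip: "interval_partition \<beta>" "interval_partition \<gamma>" and cs: "correspondence \<beta> \<gamma> cs"
  shows "dis_H \<beta> \<gamma> cs \<ge> \<bar>IP_len \<gamma> - IP_len \<beta>\<bar>"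
proof -
  define S where "S = sum_list (map (\<lambda>p. \<bar>Leb (fst p) - Leb (snd p)\<bar>) cs)"
  define SU where "SU = sum_list (map (\<lambda>p. Leb (fst p)) cs)"
  define SV where "SV = sum_list (map (\<lambda>p. Leb (snd p)) cs)"
  have "SU = sum_list (map Leb (map fst cs))" by (simp add: SU_def o_def)
  also have "\<dots> \<le> IP_len \<beta>"
    by (rule sorted_sum_le'[OF ip(1)]) (use cs in \<open>auto simp: correspondence_def\<close>)
  finally have hU: "SU \<le> IP_len \<beta>" .
  have "SV = sum_list (map Leb (map snd cs))" by (simp add: SV_def o_def)
  also have "\<dots> \<le> IP_len \<gamma>"
    by (rule sorted_sum_le'[OF ip(2)]) (use cs in \<open>auto simp: correspondence_def\<close>)
  finally have hV: "SV \<le> IP_len \<gamma>" .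
  have "\<bar>SU - SV\<bar> = \<bar>sum_list (map (\<lambda>p. Leb (fst p) - Leb (snd p)) cs)\<bar>"
    by (simp add: SU_def SV_def sum_list_subtractf)
  also have "\<dots> \<le> sum_list (map abs (map (\<lambda>p. Leb (fst p) - Leb (snd p)) cs))"
    by (rule sum_list_abs[of "map (\<lambda>p. Leb (fst p) - Leb (snd p)) cs"])
  also have "\<dots> = S" by (simp add: S_def o_def)
  finally have hS: "\<bar>SU - SV\<bar> \<le> S" .
  have "\<bar>IP_len \<gamma> - IP_len \<beta>\<bar> \<le> max (S + IP_len \<beta> - SU) (S + IP_len \<gamma> - SV)"
    using hU hV hS by (simp add: abs_le_iff le_max_iff_disj abs_if split: if_splits) linarith?
  then show ?thesis unfolding dis_H_def Let_def S_def SU_def SV_def .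
qed

lemma Max_cons: "Max (insert (0::real) (set (a # ys))) = max a (Max (insert 0 (set ys)))"
proof -
  have "insert (0::real) (set (a # ys)) = insert a (insert 0 (set ys))" by auto
  then show ?thesis by (simp del: insert_commute Max_insert add: Max_insert[of "insert 0 (set ys)" a])
qed

lemma Max_scale:
  assumes "k \<ge> 0"
  shows "Max (insert 0 (set (map (\<lambda>p. k * f p) xs))) = k * Max (insert (0::real) (set (map f xs)))"
proof (induction xs)
  case Nil then show ?case by simp
next
  case (Cons x xs)
  have "Max (insert 0 (set (map (\<lambda>p. k * f p) (x # xs)))) = max (k * f x) (Max (insert 0 (set (map (\<lambda>p. k * f p) xs))))"
    unfolding list.map(2) by (rule Max_cons)
  also have "\<dots> = max (k * f x) (k * Max (insert 0 (set (map f xs))))" using Cons by simp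
  also have "\<dots> = k * max (f x) (Max (insert 0 (set (map f xs))))"
    using assms by (simp add: max_mult_distrib_left)
  also have "\<dots> = k * Max (insert 0 (set (map f (x # xs))))"
    unfolding list.map(2) Max_cons ..
  finally show ?case .
qed

lemma Max_nonneg: "0 \<le> Max (insert (0::real) (set xs))"
  by (simp add: Max_ge_iff)

lemma Max_bound: "0 \<le> B \<Longrightarrow> (\<And>x. x \<in> set xs \<Longrightarrow> x \<le> B) \<Longrightarrow> Max (insert (0::real) (set xs)) \<le> B"
  by (simp add: Max_le_iff)

lemma inf_le_scaled:
  fixes f g :: "'a \<Rightarrow> real"
  assumes "C \<noteq> {}" "\<And>x. x \<in> C \<Longrightarrow> 0 \<le> f x" "m > 0" "\<And>x. x \<in> C \<Longrightarrow> m * f x \<le> g x"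
  shows "m * (INF x\<in>C. f x) \<le> (INF x\<in>C. g x)"
proof (rule cINF_greatest[OF assms(1)])
  fix x assume x: "x \<in> C"
  have "bdd_below (f ` C)" using assms(2) by (meson bdd_belowI2)
  then have "(INF x\<in>C. f x) \<le> f x" using x by (rule cINF_lower)
  then have "m * (INF x\<in>C. f x) \<le> m * f x" using assms(3) by simp
  also have "\<dots> \<le> g x" using assms(4) x by blast
  finally show "m * (INF x\<in>C. f x) \<le> g x" .
qed

lemma arith1:
  fixes a b d c k :: real
  assumes "c > 0" "k > 0" "b \<ge> 0" "d \<ge> 0"
  shows "min c k * max a (max b d) \<le> max (c * a) (max (k * b) (k * d))"
proof -
  have m: "min c k > 0" "min c k \<le> c" "min c k \<le> k" using assms by auto
  show ?thesis
  proof (cases "max b d \<le> a")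
    case True
    then have "a \<ge> 0" using assms by simp
    then have "min c k * a \<le> c * a" using m by (simp add: mult_right_mono)
    then show ?thesis using True by (simp add: max_def)
  next
    case False
    then have X: "max a (max b d) = max b d" by (auto simp: max_def)
    have "min c k * b \<le> k * b" "min c k * d \<le> k * d" using m assms by (simp_all add: mult_right_mono)
    then show ?thesis unfolding X by (simp add: max_def)
  qed
qed

lemma arith2:
  fixes a b d c k :: real
  assumes "c > 0" "k > 0" "b \<ge> 0" "d \<ge> 0"
  shows "max (c * a) (max (k * b) (k * d)) \<le> max c k * max a (max b d)"
proof -
  have M: "max c k > 0" using assms by simp
  have "c * a \<le> max c k * max a (max b d)"
  proof (cases "a \<ge> 0")
    case True
    then have "c * a \<le> max c k * a" by (simp add: mult_right_mono)
    also have "\<dots> \<le> max c k * max a (max b d)" using M by (simp add: mult_left_mono)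
    finally show ?thesis .
  next
    case False
    then have "c * a \<le> 0" using assms by (intro mult_nonneg_nonpos) auto
    also have "0 \<le> max c k * max a (max b d)" using M assms by simp
    finally show ?thesis .
  qed
  moreover have "k * b \<le> max c k * max a (max b d)"
  proof -
    have "k * b \<le> max c k * b" using assms by (simp add: mult_right_mono)
    also have "\<dots> \<le> max c k * max a (max b d)" using M by (simp add: mult_left_mono)
    finally show ?thesis .
  qed
  moreover have "k * d \<le> max c k * max a (max b d)"
  proof -
    have "k * d \<le> max c k * d" using assms by (simp add: mult_right_mono)
    also have "\<dots> \<le> max c k * max a (max b d)" using M by (simp add: mult_left_mono)
    finally show ?thesis .
  qed
  ultimately show ?thesis by simp
qed



lemma ia_ip: "\<beta> \<in> IA \<alpha> \<Longrightarrow> interval_partition \<beta>"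
  by (simp add: IA_def)

lemma ia_scale:
  assumes c: "c > 0" and b: "\<beta> \<in> IA \<alpha>"
  shows "scale c \<beta> \<in> IA \<alpha>"
proof -
  have ip: "interval_partition \<beta>" using b by (rule ia_ip)
  have "has_diversity \<alpha> (scale c \<beta>)"
    unfolding has_diversity_def
  proof
    fix t assume "t \<in> {0..IP_len (scale c \<beta>)}"
    then have t0: "0 \<le> t / c" using c by simp
    have eq: "c * (t / c) = t" using c by simp
    have "((\<lambda>h. h powr \<alpha> * real (div_count (scale c \<beta>) (c * (t / c)) h)) \<longlongrightarrow>
        c powr \<alpha> * Lim (at_right 0) (\<lambda>h. h powr \<alpha> * real (div_count \<beta> (t / c) h))) (at_right 0)"
      by (rule lim_scale[OF c lim_exists[OF b t0]])
    then have "((\<lambda>h. h powr \<alpha> * real (div_count (scale c \<beta>) t h)) \<longlongrightarrow>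
        c powr \<alpha> * Lim (at_right 0) (\<lambda>h. h powr \<alpha> * real (div_count \<beta> (t / c) h))) (at_right 0)"
      by (simp only: eq)
    then show "\<exists>L. ((\<lambda>h. h powr \<alpha> * real (div_count (scale c \<beta>) t h)) \<longlongrightarrow> L) (at_right 0)" by blast
  qed
  then show ?thesis using ip_scale[OF c ip] by (simp add: IA_def)
qed

lemma div_block_scale:
  assumes b: "\<beta> \<in> IA \<alpha>" and U: "U \<in> \<beta>" and c: "c > 0"
  shows "div_block \<alpha> (scale c \<beta>) (sp c U) = c powr \<alpha> * div_block \<alpha> \<beta> U"
proof -
  have "0 \<le> fst U" "fst U < snd U" using ip_basic[OF ia_ip[OF b] U] by auto
  then have t0: "0 \<le> (fst U + snd U) / 2" by simp
  have eq: "(c * fst U + c * snd U) / 2 = c * ((fst U + snd U) / 2)" by (simp add: algebra_simps)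
  show ?thesis unfolding div_block_def sp_simps eq by (rule diversity_scale[OF b t0 c])
qed

lemma div_inf_scale:
  assumes b: "\<beta> \<in> IA \<alpha>" and c: "c > 0"
  shows "div_inf \<alpha> (scale c \<beta>) = c powr \<alpha> * div_inf \<alpha> \<beta>"
  unfolding div_inf_def IP_len_scale[OF c ia_ip[OF b]]
  by (rule diversity_scale[OF b IP_len_nonneg[OF ia_ip[OF b]] c])

lemma div_block_bounds:
  assumes b: "\<beta> \<in> IA \<alpha>" and U: "U \<in> \<beta>" and a: "\<alpha> < 1"
  shows "0 \<le> div_block \<alpha> \<beta> U" "div_block \<alpha> \<beta> U \<le> div_inf \<alpha> \<beta>"
proof -
  have "0 \<le> fst U" "fst U < snd U" "snd U \<le> IP_len \<beta>" using ip_basic[OF ia_ip[OF b] U] by auto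
  then have t0: "0 \<le> (fst U + snd U) / 2" "(fst U + snd U) / 2 \<le> IP_len \<beta>" by simp_all
  show "0 \<le> div_block \<alpha> \<beta> U" unfolding div_block_def by (rule diversity_nonneg[OF b t0(1) a])
  show "div_block \<alpha> \<beta> U \<le> div_inf \<alpha> \<beta>" unfolding div_block_def div_inf_def
    by (rule diversity_mono[OF b t0 a])
qed

lemma div_inf_nonneg: "\<beta> \<in> IA \<alpha> \<Longrightarrow> \<alpha> < 1 \<Longrightarrow> 0 \<le> div_inf \<alpha> \<beta>"
  unfolding div_inf_def by (rule diversity_nonneg) (auto intro: IP_len_nonneg ia_ip)

lemma dis_alpha_nonneg: "0 \<le> dis_alpha \<alpha> \<beta> \<gamma> cs"
  by (simp add: dis_alpha_def le_max_iff_disj)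

lemma dis_alpha_scale:
  assumes b: "\<beta> \<in> IA \<alpha>" and g: "\<gamma> \<in> IA \<alpha>" and c: "c > 0" and cs: "correspondence \<beta> \<gamma> cs"
  shows "dis_alpha \<alpha> (scale c \<beta>) (scale c \<gamma>) (map (spp c) cs)
    = max (c * dis_H \<beta> \<gamma> cs)
        (max (c powr \<alpha> * Max (insert 0 (set (map (\<lambda>p. \<bar>div_block \<alpha> \<beta> (fst p) - div_block \<alpha> \<gamma> (snd p)\<bar>) cs))))
             (c powr \<alpha> * \<bar>div_inf \<alpha> \<beta> - div_inf \<alpha> \<gamma>\<bar>))"
proof -
  have k: "c powr \<alpha> > 0" using c by simp
  have pt: "\<bar>k * a - k * b\<bar> = k * \<bar>a - b\<bar>" if "k > 0" for k a b :: real
    using that by (simp add: right_diff_distrib[symmetric] abs_mult)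
  have m: "\<forall>p\<in>set cs. fst p \<in> \<beta> \<and> snd p \<in> \<gamma>" using cs by (simp add: correspondence_def)
  have mq: "map (\<lambda>p. \<bar>div_block \<alpha> (scale c \<beta>) (fst p) - div_block \<alpha> (scale c \<gamma>) (snd p)\<bar>) (map (spp c) cs)
      = map (\<lambda>p. c powr \<alpha> * \<bar>div_block \<alpha> \<beta> (fst p) - div_block \<alpha> \<gamma> (snd p)\<bar>) cs"
  proof (simp only: map_map o_def, rule map_cong[OF refl])
    fix p assume "p \<in> set cs"
    then have "fst p \<in> \<beta>" "snd p \<in> \<gamma>" using m by auto
    then show "\<bar>div_block \<alpha> (scale c \<beta>) (fst (spp c p)) - div_block \<alpha> (scale c \<gamma>) (snd (spp c p))\<bar>
        = c powr \<alpha> * \<bar>div_block \<alpha> \<beta> (fst p) - div_block \<alpha> \<gamma> (snd p)\<bar>"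
      using div_block_scale[OF b _ c] div_block_scale[OF g _ c] pt[OF k] by simp
  qed
  show ?thesis
    unfolding dis_alpha_def dis_H_scale[OF c ia_ip[OF b] ia_ip[OF g]] div_inf_scale[OF b c] div_inf_scale[OF g c]
      pt[OF k] mq Max_scale[OF less_imp_le[OF k]] ..
qed

lemma arith3:
  fixes c L S \<epsilon> :: real
  assumes "c > 0" "S \<le> L" "L - \<epsilon> < S" "\<epsilon> > 0"
  shows "max (\<bar>1 - c\<bar> * S + L - S) (\<bar>1 - c\<bar> * S + c * L - c * S) \<le> \<bar>c - 1\<bar> * L + (2 + 2 * c) * \<epsilon>"
proof -
  define \<delta> where "\<delta> = L - S"
  have d: "0 \<le> \<delta>" "\<delta> < \<epsilon>" using assms by (auto simp: \<delta>_def)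
  have a: "\<bar>1 - c\<bar> = \<bar>c - 1\<bar>" by simp
  have e1: "\<bar>1 - c\<bar> * S + L - S = \<bar>c - 1\<bar> * L + (1 - \<bar>c - 1\<bar>) * \<delta>"
    unfolding a \<delta>_def by (simp add: algebra_simps)
  have e2: "\<bar>1 - c\<bar> * S + c * L - c * S = \<bar>c - 1\<bar> * L + (c - \<bar>c - 1\<bar>) * \<delta>"
    unfolding a \<delta>_def by (simp add: algebra_simps)
  have "(1 - \<bar>c - 1\<bar>) * \<delta> \<le> 1 * \<delta>" using d by (intro mult_right_mono) auto
  moreover have "(c - \<bar>c - 1\<bar>) * \<delta> \<le> c * \<delta>" using d by (intro mult_right_mono) auto
  moreover have "c * \<delta> \<le> c * \<epsilon>" using d assms(1) by simp
  moreover have "0 \<le> c * \<epsilon>" using d assms(1) by simp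
  ultimately have f: "(1 - \<bar>c - 1\<bar>) * \<delta> \<le> 1 * \<delta>" "(c - \<bar>c - 1\<bar>) * \<delta> \<le> c * \<delta>"
     "c * \<delta> \<le> c * \<epsilon>" "0 \<le> c * \<epsilon>" by blast+
  have ee: "(2 + 2 * c) * \<epsilon> = 2 * \<epsilon> + 2 * (c * \<epsilon>)" by (simp add: algebra_simps)
  have "(1 - \<bar>c - 1\<bar>) * \<delta> \<le> (2 + 2 * c) * \<epsilon>" unfolding ee using f d by linarith
  moreover have "(c - \<bar>c - 1\<bar>) * \<delta> \<le> (2 + 2 * c) * \<epsilon>" unfolding ee using f d by linarith
  ultimately show ?thesis unfolding e1 e2 by simp
qed



lemma abs_lin1: "0 \<le> (x::real) \<Longrightarrow> \<bar>x - c * x\<bar> = \<bar>1 - c\<bar> * x"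
proof -
  assume "0 \<le> x"
  moreover have "x - c * x = (1 - c) * x" by (simp add: algebra_simps)
  ultimately show ?thesis by (simp add: abs_mult)
qed

lemma abs_lin2: "0 \<le> (x::real) \<Longrightarrow> \<bar>c - 1\<bar> * x = \<bar>c * x - x\<bar>"
proof -
  assume "0 \<le> x"
  moreover have "c * x - x = (c - 1) * x" by (simp add: algebra_simps)
  ultimately show ?thesis by (simp add: abs_mult)
qed

lemma good_corr:
  assumes ip: "interval_partition \<beta>" and c: "c > 0" and e: "\<epsilon> > 0"
  shows "\<exists>xs. set xs \<subseteq> \<beta> \<and> correspondence \<beta> (scale c \<beta>) (map (\<lambda>U. (U, sp c U)) xs)
     \<and> dis_H \<beta> (scale c \<beta>) (map (\<lambda>U. (U, sp c U)) xs) \<le> \<bar>c - 1\<bar> * IP_len \<beta> + (2 + 2 * c) * \<epsilon>"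
proof -
  obtain F where F: "finite F" "F \<subseteq> \<beta>" "sum Leb F > IP_len \<beta> - \<epsilon>"
    using approx_sum[OF ip e] by blast
  obtain xs where xs: "set xs = F" "distinct xs" "sorted_wrt (\<lambda>U V. fst U < fst V) xs"
    using sorted_list_exists[OF ip F(1,2)] by blast
  define cs where "cs = map (\<lambda>U. (U, sp c U)) xs"
  define S where "S = sum_list (map Leb xs)"
  have SF: "S = sum Leb F" unfolding S_def using xs(1,2) by (metis sum.distinct_set_conv_list)
  have SL: "S \<le> IP_len \<beta>" unfolding S_def by (rule sorted_sum_le'[OF ip]) (use xs F in auto)
  have corr: "correspondence \<beta> (scale c \<beta>) cs"
    unfolding correspondence_def
  proof (intro conjI)
    show "\<forall>p\<in>set cs. fst p \<in> \<beta> \<and> snd p \<in> scale c \<beta>"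
      using xs(1) F(2) by (auto simp: cs_def scale_sp)
    have "map fst cs = xs" by (simp add: cs_def o_def)
    then show "sorted_wrt (\<lambda>U U'. fst U < fst U') (map fst cs)" using xs(3) by simp
    have "map snd cs = map (sp c) xs" by (simp add: cs_def o_def)
    moreover have "sorted_wrt (\<lambda>U U'. fst U < fst U') (map (sp c) xs)"
      unfolding sorted_wrt_map using xs(3) c by (auto elim!: sorted_wrt_mono_rel[rotated])
    ultimately show "sorted_wrt (\<lambda>U U'. fst U < fst U') (map snd cs)" by simp
  qed
  have s1: "sum_list (map (\<lambda>p. \<bar>Leb (fst p) - Leb (snd p)\<bar>) cs) = \<bar>1 - c\<bar> * S"
  proof -
    have "map (\<lambda>p. \<bar>Leb (fst p) - Leb (snd p)\<bar>) cs = map (\<lambda>U. \<bar>1 - c\<bar> * Leb U) xs"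
      unfolding cs_def map_map o_def
    proof (rule map_cong[OF refl])
      fix U assume "U \<in> set xs"
      then have "0 \<le> Leb U" using ip_basic(2)[OF ip, of U] xs(1) F(2) by (auto simp: Leb_def)
      then show "\<bar>Leb (fst (U, sp c U)) - Leb (snd (U, sp c U))\<bar> = \<bar>1 - c\<bar> * Leb U"
        by (simp add: abs_lin1)
    qed
    then show ?thesis by (simp only: S_def sum_list_const_mult)
  qed
  have s2: "sum_list (map (\<lambda>p. Leb (fst p)) cs) = S" by (simp add: cs_def S_def o_def)
  have s3: "sum_list (map (\<lambda>p. Leb (snd p)) cs) = c * S" by (simp add: cs_def S_def o_def sum_list_const_mult)
  have "dis_H \<beta> (scale c \<beta>) cs = max (\<bar>1 - c\<bar> * S + IP_len \<beta> - S) (\<bar>1 - c\<bar> * S + c * IP_len \<beta> - c * S)"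
    unfolding dis_H_def Let_def s1 s2 s3 IP_len_scale[OF c ip] ..
  also have "\<dots> \<le> \<bar>c - 1\<bar> * IP_len \<beta> + (2 + 2 * c) * \<epsilon>"
    by (rule arith3[OF c SL _ e]) (use F(3) SF in simp)
  finally show ?thesis using corr xs(1) F(2) unfolding cs_def by blast
qed

theorem lemma3p4:
  fixes \<alpha> c :: real and \<beta> \<gamma> :: ipart
  assumes "0 < \<alpha>" and "\<alpha> < 1" and "0 < c"
  shows "bij_betw (scale c) IH IH
    \<and> bij_betw (scale c) (IA \<alpha>) (IA \<alpha>)
    \<and> (\<beta> \<in> IA \<alpha> \<longrightarrow> has_diversity \<alpha> (scale c \<beta>) \<and>
           (\<forall>t>0. diversity \<alpha> (scale c \<beta>) (c * t) = c powr \<alpha> * diversity \<alpha> \<beta> t))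
    \<and> (\<beta> \<in> IA \<alpha> \<longrightarrow> \<gamma> \<in> IA \<alpha> \<longrightarrow>
         (
           dH' \<beta> (scale c \<beta>) = \<bar>c - 1\<bar> * IP_len \<beta>
         \<and> dH' (scale c \<beta>) (scale c \<gamma>) = c * dH' \<beta> \<gamma>
         \<and> d_alpha \<alpha> \<beta> (scale c \<beta>) \<le> max (\<bar>c powr \<alpha> - 1\<bar> * div_inf \<alpha> \<beta>) (\<bar>c - 1\<bar> * IP_len \<beta>)
         \<and> min c (c powr \<alpha>) * d_alpha \<alpha> \<beta> \<gamma> \<le> d_alpha \<alpha> (scale c \<beta>) (scale c \<gamma>)
         \<and> d_alpha \<alpha> (scale c \<beta>) (scale c \<gamma>) \<le> max c (c powr \<alpha>) * d_alpha \<alpha> \<beta> \<gamma>))"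
proof -
  have c: "c > 0" using assms(3) .
  have c0: "c \<noteq> 0" using c by simp
  have ic: "1 / c > 0" using c by simp
  have inv1: "scale c (scale (1/c) X) = X" for X using scale_inv[of "1/c" X] c by simp
  have inv2: "scale (1/c) (scale c X) = X" for X using scale_inv[OF c0] .
  have P1: "bij_betw (scale c) IH IH"
  proof (rule bij_betw_byWitness[where f'="scale (1/c)"])
    show "scale c ` IH \<subseteq> IH" using ip_scale[OF c] by (auto simp: IH_def)
    show "scale (1/c) ` IH \<subseteq> IH" using ip_scale[OF ic] by (auto simp: IH_def)
  qed (auto simp: inv1 inv2)
  have P2: "bij_betw (scale c) (IA \<alpha>) (IA \<alpha>)"
  proof (rule bij_betw_byWitness[where f'="scale (1/c)"])
    show "scale c ` IA \<alpha> \<subseteq> IA \<alpha>" using ia_scale[OF c] by auto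
    show "scale (1/c) ` IA \<alpha> \<subseteq> IA \<alpha>" using ia_scale[OF ic] by auto
  qed (auto simp: inv1 inv2)
  have P3: "\<beta> \<in> IA \<alpha> \<longrightarrow> has_diversity \<alpha> (scale c \<beta>) \<and>
           (\<forall>t>0. diversity \<alpha> (scale c \<beta>) (c * t) = c powr \<alpha> * diversity \<alpha> \<beta> t)"
  proof
    assume b: "\<beta> \<in> IA \<alpha>"
    have "has_diversity \<alpha> (scale c \<beta>)" using ia_scale[OF c b] by (simp add: IA_def)
    moreover have "\<forall>t>0. diversity \<alpha> (scale c \<beta>) (c * t) = c powr \<alpha> * diversity \<alpha> \<beta> t"
      using diversity_scale[OF b _ c] by simp
    ultimately show "has_diversity \<alpha> (scale c \<beta>) \<and>
           (\<forall>t>0. diversity \<alpha> (scale c \<beta>) (c * t) = c powr \<alpha> * diversity \<alpha> \<beta> t)" by blast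
  qed
  have P4: "dH' \<beta> (scale c \<beta>) = \<bar>c - 1\<bar> * IP_len \<beta>
         \<and> dH' (scale c \<beta>) (scale c \<gamma>) = c * dH' \<beta> \<gamma>
         \<and> d_alpha \<alpha> \<beta> (scale c \<beta>) \<le> max (\<bar>c powr \<alpha> - 1\<bar> * div_inf \<alpha> \<beta>) (\<bar>c - 1\<bar> * IP_len \<beta>)
         \<and> min c (c powr \<alpha>) * d_alpha \<alpha> \<beta> \<gamma> \<le> d_alpha \<alpha> (scale c \<beta>) (scale c \<gamma>)
         \<and> d_alpha \<alpha> (scale c \<beta>) (scale c \<gamma>) \<le> max c (c powr \<alpha>) * d_alpha \<alpha> \<beta> \<gamma>"
    if b: "\<beta> \<in> IA \<alpha>" and g: "\<gamma> \<in> IA \<alpha>"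
  proof -
    have ipb: "interval_partition \<beta>" using b by (rule ia_ip)
    have ipg: "interval_partition \<gamma>" using g by (rule ia_ip)
    have ipsb: "interval_partition (scale c \<beta>)" using ip_scale[OF c ipb] .
    have L0: "0 \<le> IP_len \<beta>" using IP_len_nonneg[OF ipb] .
    have k: "c powr \<alpha> > 0" using c by simp
    have nil: "correspondence X Y []" for X Y by (simp add: correspondence_def)
    define C where "C = {cs. correspondence \<beta> \<gamma> cs}"
    have Cne: "C \<noteq> {}" using nil unfolding C_def by blast
    have disH0: "0 \<le> dis_H X Y cs" if "interval_partition X" "interval_partition Y" "correspondence X Y cs" for X Y cs
      using dis_H_lower[OF that] by linarith
    have Q1: "dH' \<beta> (scale c \<beta>) = \<bar>c - 1\<bar> * IP_len \<beta>"
    proof (rule antisym)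
      have lb: "\<bar>c - 1\<bar> * IP_len \<beta> \<le> dis_H \<beta> (scale c \<beta>) cs" if "correspondence \<beta> (scale c \<beta>) cs" for cs
      proof -
        have "\<bar>c - 1\<bar> * IP_len \<beta> = \<bar>IP_len (scale c \<beta>) - IP_len \<beta>\<bar>"
          using L0 unfolding IP_len_scale[OF c ipb] by (rule abs_lin2)
        also have "\<dots> \<le> dis_H \<beta> (scale c \<beta>) cs" by (rule dis_H_lower[OF ipb ipsb that])
        finally show ?thesis .
      qed
      show "\<bar>c - 1\<bar> * IP_len \<beta> \<le> dH' \<beta> (scale c \<beta>)"
        unfolding dH'_def by (rule cINF_greatest) (use nil lb in auto)
      show "dH' \<beta> (scale c \<beta>) \<le> \<bar>c - 1\<bar> * IP_len \<beta>"
      proof (rule field_le_epsilon)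
        fix e :: real assume e: "0 < e"
        define \<epsilon> where "\<epsilon> = e / (2 + 2 * c)"
        have ee: "(2 + 2 * c) * \<epsilon> = e" "\<epsilon> > 0" using c e by (auto simp: \<epsilon>_def)
        obtain xs where xs: "correspondence \<beta> (scale c \<beta>) (map (\<lambda>U. (U, sp c U)) xs)"
          "dis_H \<beta> (scale c \<beta>) (map (\<lambda>U. (U, sp c U)) xs) \<le> \<bar>c - 1\<bar> * IP_len \<beta> + (2 + 2 * c) * \<epsilon>"
          using good_corr[OF ipb c ee(2)] by blast
        have "dH' \<beta> (scale c \<beta>) \<le> dis_H \<beta> (scale c \<beta>) (map (\<lambda>U. (U, sp c U)) xs)"
          unfolding dH'_def
        proof (rule cINF_lower)
          show "bdd_below ((\<lambda>cs. dis_H \<beta> (scale c \<beta>) cs) ` {cs. correspondence \<beta> (scale c \<beta>) cs})"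
          proof (rule bdd_belowI2[where m=0])
            fix x assume "x \<in> {cs. correspondence \<beta> (scale c \<beta>) cs}"
            then show "0 \<le> dis_H \<beta> (scale c \<beta>) x" using disH0[OF ipb ipsb] by simp
          qed
        qed (use xs(1) in simp)
        then show "dH' \<beta> (scale c \<beta>) \<le> \<bar>c - 1\<bar> * IP_len \<beta> + e" using xs(2) ee by simp
      qed
    qed
    have Q2: "dH' (scale c \<beta>) (scale c \<gamma>) = c * dH' \<beta> \<gamma>"
    proof -
      have e1: "dH' (scale c \<beta>) (scale c \<gamma>) = (INF cs\<in>C. dis_H (scale c \<beta>) (scale c \<gamma>) (map (spp c) cs))"
        unfolding dH'_def corr_set_scale[OF c] C_def image_image ..
      have e2: "dH' \<beta> \<gamma> = (INF cs\<in>C. dis_H \<beta> \<gamma> cs)" unfolding dH'_def C_def ..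
      have sc: "dis_H (scale c \<beta>) (scale c \<gamma>) (map (spp c) cs) = c * dis_H \<beta> \<gamma> cs" for cs
        by (rule dis_H_scale[OF c ipb ipg])
      have f0: "0 \<le> dis_H \<beta> \<gamma> cs" if "cs \<in> C" for cs using disH0[OF ipb ipg] that by (simp add: C_def)
      have "c * (INF cs\<in>C. dis_H \<beta> \<gamma> cs) \<le> (INF cs\<in>C. dis_H (scale c \<beta>) (scale c \<gamma>) (map (spp c) cs))"
      proof (rule inf_le_scaled[OF Cne f0 c])
        fix cs assume "cs \<in> C"
        show "c * dis_H \<beta> \<gamma> cs \<le> dis_H (scale c \<beta>) (scale c \<gamma>) (map (spp c) cs)"
          unfolding sc by (rule order_refl)
      qed
      moreover have "(1 / c) * (INF cs\<in>C. dis_H (scale c \<beta>) (scale c \<gamma>) (map (spp c) cs)) \<le> (INF cs\<in>C. dis_H \<beta> \<gamma> cs)"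
        by (rule inf_le_scaled[OF Cne _ ic]) (use f0 c in \<open>simp_all add: sc\<close>)
      ultimately show ?thesis unfolding e1 e2 using c by (simp add: field_simps)
    qed
    have Q3: "d_alpha \<alpha> \<beta> (scale c \<beta>) \<le> max (\<bar>c powr \<alpha> - 1\<bar> * div_inf \<alpha> \<beta>) (\<bar>c - 1\<bar> * IP_len \<beta>)"
    proof (rule field_le_epsilon)
      fix e :: real assume e: "0 < e"
      define \<epsilon> where "\<epsilon> = e / (2 + 2 * c)"
      have ee: "(2 + 2 * c) * \<epsilon> = e" "\<epsilon> > 0" using c e by (auto simp: \<epsilon>_def)
      obtain xs where xs: "set xs \<subseteq> \<beta>" "correspondence \<beta> (scale c \<beta>) (map (\<lambda>U. (U, sp c U)) xs)"
        "dis_H \<beta> (scale c \<beta>) (map (\<lambda>U. (U, sp c U)) xs) \<le> \<bar>c - 1\<bar> * IP_len \<beta> + (2 + 2 * c) * \<epsilon>"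
        using good_corr[OF ipb c ee(2)] by blast
      define cs where "cs = map (\<lambda>U. (U, sp c U)) xs"
      define B where "B = \<bar>c powr \<alpha> - 1\<bar> * div_inf \<alpha> \<beta>"
      have D0: "0 \<le> div_inf \<alpha> \<beta>" by (rule div_inf_nonneg[OF b assms(2)])
      have B0: "0 \<le> B" unfolding B_def using D0 by simp
      have Mx: "Max (insert 0 (set (map (\<lambda>p. \<bar>div_block \<alpha> \<beta> (fst p) - div_block \<alpha> (scale c \<beta>) (snd p)\<bar>) cs))) \<le> B"
      proof (rule Max_bound[OF B0])
        fix x assume "x \<in> set (map (\<lambda>p. \<bar>div_block \<alpha> \<beta> (fst p) - div_block \<alpha> (scale c \<beta>) (snd p)\<bar>) cs)"
        then obtain U where U: "U \<in> set xs" "x = \<bar>div_block \<alpha> \<beta> U - div_block \<alpha> (scale c \<beta>) (sp c U)\<bar>"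
          unfolding cs_def by auto
        have Ub: "U \<in> \<beta>" using U(1) xs(1) by blast
        have db: "0 \<le> div_block \<alpha> \<beta> U" "div_block \<alpha> \<beta> U \<le> div_inf \<alpha> \<beta>"
          using div_block_bounds[OF b Ub assms(2)] by auto
        have "x = \<bar>1 - c powr \<alpha>\<bar> * div_block \<alpha> \<beta> U"
          unfolding U(2) div_block_scale[OF b Ub c] using db(1) by (rule abs_lin1)
        also have "\<dots> \<le> \<bar>c powr \<alpha> - 1\<bar> * div_inf \<alpha> \<beta>"
          using db by (simp add: abs_minus_commute mult_left_mono)
        finally show "x \<le> B" unfolding B_def .
      qed
      have Dd: "\<bar>div_inf \<alpha> \<beta> - div_inf \<alpha> (scale c \<beta>)\<bar> = B"
        unfolding div_inf_scale[OF b c] B_def abs_lin1[OF D0] by (simp add: abs_minus_commute)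
      have "dis_alpha \<alpha> \<beta> (scale c \<beta>) cs \<le> max (\<bar>c - 1\<bar> * IP_len \<beta> + e) B"
      proof -
        have h1: "dis_H \<beta> (scale c \<beta>) cs \<le> \<bar>c - 1\<bar> * IP_len \<beta> + e" using xs(3) ee unfolding cs_def by simp
        show ?thesis unfolding dis_alpha_def Dd
          using max.mono[OF h1 max.mono[OF Mx order_refl[of B]]] by simp
      qed
      also have "\<dots> \<le> max B (\<bar>c - 1\<bar> * IP_len \<beta>) + e" using e B0 by (simp add: le_max_iff_disj)
      finally have dd: "dis_alpha \<alpha> \<beta> (scale c \<beta>) cs \<le> max B (\<bar>c - 1\<bar> * IP_len \<beta>) + e" .
      have "d_alpha \<alpha> \<beta> (scale c \<beta>) \<le> dis_alpha \<alpha> \<beta> (scale c \<beta>) cs"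
        unfolding d_alpha_def
      proof (rule cINF_lower)
        show "bdd_below ((\<lambda>cs. dis_alpha \<alpha> \<beta> (scale c \<beta>) cs) ` {cs. correspondence \<beta> (scale c \<beta>) cs})"
          by (rule bdd_belowI2[where m=0]) (rule dis_alpha_nonneg)
      qed (use xs(2) cs_def in simp)
      then show "d_alpha \<alpha> \<beta> (scale c \<beta>) \<le> max (\<bar>c powr \<alpha> - 1\<bar> * div_inf \<alpha> \<beta>) (\<bar>c - 1\<bar> * IP_len \<beta>) + e"
        using dd unfolding B_def by simp
    qed
    define G where "G cs = dis_alpha \<alpha> (scale c \<beta>) (scale c \<gamma>) (map (spp c) cs)" for cs
    define Fa where "Fa cs = dis_alpha \<alpha> \<beta> \<gamma> cs" for cs
    have e1: "d_alpha \<alpha> (scale c \<beta>) (scale c \<gamma>) = (INF cs\<in>C. G cs)"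
      unfolding d_alpha_def corr_set_scale[OF c] C_def image_image G_def ..
    have e2: "d_alpha \<alpha> \<beta> \<gamma> = (INF cs\<in>C. Fa cs)" unfolding d_alpha_def C_def Fa_def ..
    have GF: "G cs = max (c * dis_H \<beta> \<gamma> cs)
        (max (c powr \<alpha> * Max (insert 0 (set (map (\<lambda>p. \<bar>div_block \<alpha> \<beta> (fst p) - div_block \<alpha> \<gamma> (snd p)\<bar>) cs))))
             (c powr \<alpha> * \<bar>div_inf \<alpha> \<beta> - div_inf \<alpha> \<gamma>\<bar>))"
      "Fa cs = max (dis_H \<beta> \<gamma> cs)
        (max (Max (insert 0 (set (map (\<lambda>p. \<bar>div_block \<alpha> \<beta> (fst p) - div_block \<alpha> \<gamma> (snd p)\<bar>) cs))))
             \<bar>div_inf \<alpha> \<beta> - div_inf \<alpha> \<gamma>\<bar>)"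
      if "cs \<in> C" for cs
      using dis_alpha_scale[OF b g c, of cs] that unfolding G_def Fa_def C_def dis_alpha_def by auto
    have F0: "0 \<le> Fa cs" for cs unfolding Fa_def by (rule dis_alpha_nonneg)
    have G0: "0 \<le> G cs" for cs unfolding G_def by (rule dis_alpha_nonneg)
    have m0: "min c (c powr \<alpha>) > 0" "max c (c powr \<alpha>) > 0" using c k by auto
    have Q4: "min c (c powr \<alpha>) * (INF cs\<in>C. Fa cs) \<le> (INF cs\<in>C. G cs)"
    proof (rule inf_le_scaled[OF Cne _ m0(1)])
      fix cs assume "cs \<in> C"
      show "min c (c powr \<alpha>) * Fa cs \<le> G cs" unfolding GF[OF \<open>cs \<in> C\<close>]
        by (rule arith1[OF c k Max_nonneg abs_ge_zero])
    qed (rule F0)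
    have "(1 / max c (c powr \<alpha>)) * (INF cs\<in>C. G cs) \<le> (INF cs\<in>C. Fa cs)"
    proof (rule inf_le_scaled[OF Cne _ _])
      fix cs assume "cs \<in> C"
      have "G cs \<le> max c (c powr \<alpha>) * Fa cs" unfolding GF[OF \<open>cs \<in> C\<close>]
        by (rule arith2[OF c k Max_nonneg abs_ge_zero])
      then show "(1 / max c (c powr \<alpha>)) * G cs \<le> Fa cs" using m0(2) by (simp add: field_simps)
    qed (use G0 m0 in auto)
    then have Q5: "(INF cs\<in>C. G cs) \<le> max c (c powr \<alpha>) * (INF cs\<in>C. Fa cs)"
      using m0(2) by (simp add: field_simps)
    show ?thesis using Q1 Q2 Q3 Q4 Q5 unfolding e1 e2 by blast
  qed
  show ?thesis using P1 P2 P3 P4 by blast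
qed

end
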